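(* For all integers $n > 2$, $\det'(K_n) = \left\lfloor \frac{2n}{3} \right\rfloor$.
   Context: $K_n$ is the complete graph on $n$ vertices. For a graph $G$ with at most one isolated vertex and no component isomorphic to $K_2$, an edge subset $T$ is an edge determining set if the only automorphism $\phi$ of $G$ satisfying $\{\phi(u),\phi(v)\}=\{u,v\}$ for all $\{u,v\}\in T$ is the identity; the determining index $\det'(G)$ is the minimum size of an edge determining set. *)

theory Defs
  imports "HOL-Combinatorics.Permutations"
begin

definition graph_aut :: "'a set \<Rightarrow> 'a set set \<Rightarrow> ('a \<Rightarrow> 'a) \<Rightarrow> bool" where
  "graph_aut V E \<phi> \<longleftrightarrow> \<phi> permutes V \<and>
     (\<forall>u\<in>V. \<forall>v\<in>V. {u, v} \<in> E \<longleftrightarrow> {\<phi> u, \<phi> v} \<in> E)"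

definition edge_determining :: "'a set \<Rightarrow> 'a set set \<Rightarrow> 'a set set \<Rightarrow> bool" where
  "edge_determining V E T \<longleftrightarrow> T \<subseteq> E \<and>
     (\<forall>\<phi>. graph_aut V E \<phi> \<and> (\<forall>e\<in>T. \<phi> ` e = e) \<longrightarrow> \<phi> = id)"

definition det_index :: "'a set \<Rightarrow> 'a set set \<Rightarrow> nat" where
  "det_index V E = (LEAST k. \<exists>T. edge_determining V E T \<and> finite T \<and> card T = k)"

definition K_vertices :: "nat \<Rightarrow> nat set" where
  "K_vertices n = {0..<n}"

definition K_edges :: "nat \<Rightarrow> nat set set" where
  "K_edges n = {{u, v} | u v. u < n \<and> v < n \<and> u \<noteq> v}"

end

theory Submission
  imports Defs
begin

lemma Kedge_iff: "u < n \<Longrightarrow> v < n \<Longrightarrow> {u, v} \<in> K_edges n \<longleftrightarrow> u \<noteq> v"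
  unfolding K_edges_def by (auto simp: doubleton_eq_iff)

lemma Kedge_elem: "e \<in> K_edges n \<Longrightarrow> \<exists>a b. e = {a,b} \<and> a \<noteq> b \<and> a < n \<and> b < n"
  unfolding K_edges_def by auto

lemma transp_aut:
  assumes "a < n" "b < n"
  shows "graph_aut (K_vertices n) (K_edges n) (Transposition.transpose a b)"
proof -
  have "Transposition.transpose a b permutes (K_vertices n)"
    by (rule permutes_swap_id) (use assms in \<open>auto simp: K_vertices_def\<close>)
  moreover have "\<forall>u\<in>K_vertices n. \<forall>v\<in>K_vertices n. {u, v} \<in> K_edges n \<longleftrightarrow>
      {Transposition.transpose a b u, Transposition.transpose a b v} \<in> K_edges n"
  proof (intro ballI)
    fix u v assume "u \<in> K_vertices n" "v \<in> K_vertices n"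
    then have uv: "u < n" "v < n" by (auto simp: K_vertices_def)
    have t: "Transposition.transpose a b u < n" "Transposition.transpose a b v < n"
      using uv assms by (auto simp: transpose_def)
    show "{u, v} \<in> K_edges n \<longleftrightarrow>
      {Transposition.transpose a b u, Transposition.transpose a b v} \<in> K_edges n"
      using Kedge_iff[OF uv] Kedge_iff[OF t] transpose_eq_imp_eq[of a b u v] by auto
  qed
  ultimately show ?thesis unfolding graph_aut_def by blast
qed

lemma fix_img: "(\<forall>x\<in>e. f x = x) \<Longrightarrow> f ` e = e"
  by (auto simp: image_iff)

lemma lower_bound:
  assumes det: "edge_determining (K_vertices n) (K_edges n) T" and fin: "finite T"
  shows "2 * n \<le> 3 * card T + 2"
proof -
  let ?V = "K_vertices n"
  have TE: "T \<subseteq> K_edges n" and detp: "\<And>\<phi>. graph_aut ?V (K_edges n) \<phi> \<Longrightarrow> (\<forall>e\<in>T. \<phi> ` e = e) \<Longrightarrow> \<phi> = id"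
    using det unfolding edge_determining_def by blast+
  define D where "D = \<Union>T"
  have DV: "D \<subseteq> ?V" using TE unfolding D_def K_vertices_def K_edges_def by auto
  have finV: "finite ?V" by (simp add: K_vertices_def)
  have finD: "finite D" using DV finV finite_subset by blast
  have cardV: "card ?V = n" by (simp add: K_vertices_def)
  have VD1: "card (?V - D) \<le> 1"
  proof -
    have "\<forall>a\<in>?V - D. \<forall>b\<in>?V - D. a = b"
    proof (intro ballI, rule ccontr)
      fix a b assume a: "a \<in> ?V - D" and b: "b \<in> ?V - D" and ab: "a \<noteq> b"
      have "Transposition.transpose a b = id"
      proof (rule detp)
        show "graph_aut ?V (K_edges n) (Transposition.transpose a b)"
          using a b by (intro transp_aut) (auto simp: K_vertices_def)
        show "\<forall>e\<in>T. Transposition.transpose a b ` e = e"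
        proof
          fix e assume "e \<in> T"
          then have "a \<notin> e" "b \<notin> e" using a b unfolding D_def by auto
          then show "Transposition.transpose a b ` e = e"
            by (intro fix_img) (auto simp: transpose_def)
        qed
      qed
      then show False using ab by (simp add: transpose_eq_id_iff)
    qed
    then show ?thesis using card_le_Suc0_iff_eq[of "?V - D"] finV by auto
  qed
  have cardD: "n \<le> card D + 1"
    using VD1 card_Diff_subset[OF finD DV] card_mono[OF finV DV] cardV by linarith
  define deg where "deg v = card {e\<in>T. v \<in> e}" for v
  have edge2: "\<And>e. e \<in> T \<Longrightarrow> card e = 2"
    using TE Kedge_elem by fastforce
  have hs: "(\<Sum>v\<in>D. deg v) = 2 * card T"
  proof -
    have "(\<Sum>v\<in>D. deg v) = (\<Sum>v\<in>D. \<Sum>e\<in>T. if v \<in> e then 1 else 0)"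
          proof (rule sum.cong)
      fix v assume "v \<in> D"
      have "{e\<in>T. v \<in> e} = T \<inter> {e. v \<in> e}" by blast
      then show "deg v = (\<Sum>e\<in>T. if v \<in> e then 1 else 0)"
        unfolding deg_def using fin by (simp add: sum.If_cases)
    qed simp
    also have "\<dots> = (\<Sum>e\<in>T. \<Sum>v\<in>D. if v \<in> e then 1 else 0)"
      by (rule sum.swap)
    also have "\<dots> = (\<Sum>e\<in>T. card (D \<inter> e))"
      using finD by (simp add: sum.If_cases Int_commute)
    also have "\<dots> = (\<Sum>e\<in>T. 2)"
    proof (rule sum.cong)
      fix e assume "e \<in> T"
      then have "D \<inter> e = e" unfolding D_def by auto
      then show "card (D \<inter> e) = 2" using edge2 \<open>e \<in> T\<close> by simp
    qed simp
    finally show ?thesis by simp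
  qed
  define L where "L = {v\<in>D. deg v = 1}"
  have degpos: "\<And>v. v \<in> D \<Longrightarrow> 1 \<le> deg v"
  proof -
    fix v assume "v \<in> D"
    then obtain e where "e \<in> T" "v \<in> e" unfolding D_def by auto
    then have "{e\<in>T. v \<in> e} \<noteq> {}" by auto
    moreover have "finite {e\<in>T. v \<in> e}" using fin by simp
    ultimately show "1 \<le> deg v" unfolding deg_def
      by (simp add: Suc_le_eq card_gt_0_iff)
  qed
  have LT: "card L \<le> card T"
  proof -
    define g where "g v = the_elem {e\<in>T. v \<in> e}" for v
    have g1: "\<And>v. v \<in> L \<Longrightarrow> {e\<in>T. v \<in> e} = {g v}"
    proof -
      fix v assume "v \<in> L"
      then have "card {e\<in>T. v \<in> e} = 1" unfolding L_def deg_def by auto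
      then obtain x where "{e\<in>T. v \<in> e} = {x}" by (rule card_1_singletonE)
      then show "{e\<in>T. v \<in> e} = {g v}" unfolding g_def by simp
    qed
    have "inj_on g L"
    proof (rule inj_onI, rule ccontr)
      fix v w assume v: "v \<in> L" and w: "w \<in> L" and gg: "g v = g w" and vw: "v \<noteq> w"
      define e where "e = g v"
      have gv: "g v \<in> {e\<in>T. v \<in> e}" using g1[OF v] by simp
      have gw: "g w \<in> {e\<in>T. w \<in> e}" using g1[OF w] by simp
      have eT: "e \<in> T" "v \<in> e" "w \<in> e" using gv gw gg unfolding e_def by simp_all
      have uniq: "v \<notin> e' \<and> w \<notin> e'" if "e' \<in> T" "e' \<noteq> e" for e'
      proof -
        have "v \<notin> e'"
        proof
          assume "v \<in> e'"
          then have "e' \<in> {e\<in>T. v \<in> e}" using that by simp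
          then show False using g1[OF v] that unfolding e_def by simp
        qed
        moreover have "w \<notin> e'"
        proof
          assume "w \<in> e'"
          then have "e' \<in> {e\<in>T. w \<in> e}" using that by simp
          then show False using g1[OF w] that gg unfolding e_def by simp
        qed
        ultimately show ?thesis by simp
      qed
      obtain a b where ab: "e = {a,b}" "a \<noteq> b" "a < n" "b < n"
        using Kedge_elem eT(1) TE by blast
      have "v = a \<or> v = b" "w = a \<or> w = b" using ab(1) eT by auto
      then have evw: "e = {v, w}" using ab(1) vw by auto
      have vn: "v < n" "w < n" using ab evw by (auto simp: doubleton_eq_iff)
      have "Transposition.transpose v w = id"
      proof (rule detp)
        show "graph_aut ?V (K_edges n) (Transposition.transpose v w)"
          using vn by (rule transp_aut)
        show "\<forall>e\<in>T. Transposition.transpose v w ` e = e"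
        proof
          fix e' assume e': "e' \<in> T"
          show "Transposition.transpose v w ` e' = e'"
          proof (cases "e' = e")
            case True
            then show ?thesis using evw by (simp add: insert_commute)
          next
            case False
            then have "v \<notin> e'" "w \<notin> e'" using uniq e' by auto
            then show ?thesis by (intro fix_img) (auto simp: transpose_def)
          qed
        qed
      qed
      then show False using vw by (simp add: transpose_eq_id_iff)
    qed
    moreover have "g ` L \<subseteq> T" using g1 by blast
    ultimately show ?thesis by (rule card_inj_on_le[OF _ _ fin])
  qed
  have finL: "finite L" using finD unfolding L_def by simp
  have LD: "L \<subseteq> D" unfolding L_def by auto
  have "(\<Sum>v\<in>D. deg v) = (\<Sum>v\<in>L. deg v) + (\<Sum>v\<in>D - L. deg v)"
    using sum.subset_diff[OF LD finD, of deg] by linarith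
  moreover have "card L \<le> (\<Sum>v\<in>L. deg v)"
    using sum_bounded_below[of L 1 deg] degpos LD by auto
  moreover have "2 * card (D - L) \<le> (\<Sum>v\<in>D - L. deg v)"
  proof -
    have "\<And>v. v \<in> D - L \<Longrightarrow> 2 \<le> deg v" using degpos unfolding L_def by fastforce
    then show ?thesis using sum_bounded_below[of "D - L" 2 deg] by (simp add: mult.commute)
  qed
  moreover have "card (D - L) = card D - card L" using card_Diff_subset[OF finL LD] .
  moreover have "card L \<le> card D" using card_mono[OF finD LD] .
  ultimately show ?thesis using hs LT cardD by linarith
qed

lemma img_mem: "\<phi> ` {a, b} = {a, b} \<Longrightarrow> \<phi> a \<in> {a, b}"
  by auto

lemma fix_mid:
  assumes "inj \<phi>" "\<phi> ` {a,c} = {a,c}" "\<phi> ` {c,b} = {c,b}" "a \<noteq> b" "a \<noteq> c" "b \<noteq> c"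
  shows "\<phi> a = a \<and> \<phi> b = b \<and> \<phi> c = c"
proof -
  have "\<phi> c \<in> {a,c}" using img_mem[of \<phi> c a] assms(2) by (simp add: insert_commute)
  moreover have "\<phi> c \<in> {c,b}" using img_mem[OF assms(3)] .
  ultimately have c: "\<phi> c = c" using assms by auto
  have "\<phi> a \<in> {a,c}" using img_mem[OF assms(2)] .
  moreover have "\<phi> a \<noteq> \<phi> c" using assms(1,5) by (meson injD)
  ultimately have a: "\<phi> a = a" using c by auto
  have "\<phi> b \<in> {c,b}" using img_mem[of \<phi> b c] assms(3) by (simp add: insert_commute)
  moreover have "\<phi> b \<noteq> \<phi> c" using assms(1,6) by (meson injD)
  ultimately have b: "\<phi> b = b" using c by auto
  show ?thesis using a b c by simp
qed

definition T0 :: "nat \<Rightarrow> nat set set" where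
  "T0 n = (\<lambda>i. {3*i, 3*i+1}) ` {..<n div 3} \<union> (\<lambda>i. {3*i+1, 3*i+2}) ` {..<n div 3}
     \<union> (if n mod 3 = 2 then {{1, n - 1}} else {})"

lemma T0_card: "card (T0 n) \<le> (2 * n) div 3"
proof -
  let ?m = "n div 3"
  let ?A = "(\<lambda>i. {3*i, 3*i+1}) ` {..<?m}" and ?B = "(\<lambda>i. {3*i+1, 3*i+2}) ` {..<?m}"
  let ?C = "(if n mod 3 = 2 then {{1, n - 1}} else {}) :: nat set set"
  have "card (T0 n) \<le> card (?A \<union> ?B) + card ?C"
    unfolding T0_def by (rule card_Un_le)
  also have "\<dots> \<le> card ?A + card ?B + card ?C"
    using card_Un_le[of ?A ?B] by simp
  also have "\<dots> \<le> ?m + ?m + (if n mod 3 = 2 then 1 else 0)"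
    using card_image_le[of "{..<?m}" "\<lambda>i. {3*i, 3*i+1}"]
      card_image_le[of "{..<?m}" "\<lambda>i. {3*i+1, 3*i+2}"] by simp
  also have "\<dots> = (2 * n) div 3" by presburger
  finally show ?thesis .
qed

lemma T0_fin: "finite (T0 n)"
  unfolding T0_def by simp

lemma T0_sub: assumes "n > 2" shows "T0 n \<subseteq> K_edges n"
proof
  fix e assume "e \<in> T0 n"
  then consider (A) i where "i < n div 3" "e = {3*i, 3*i+1}"
    | (B) i where "i < n div 3" "e = {3*i+1, 3*i+2}"
    | (C) "n mod 3 = 2" "e = {1, n - 1}"
    unfolding T0_def by (auto split: if_splits)
  then show "e \<in> K_edges n"
  proof cases
    case (A i)
    then have "3*i+1 < n" by linarith
    then show ?thesis using A Kedge_iff[of "3*i" n "3*i+1"] by simp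
  next
    case (B i)
    then have "3*i+2 < n" by linarith
    then show ?thesis using B Kedge_iff[of "3*i+1" n "3*i+2"] by simp
  next
    case C
    then have "1 < n - 1" "n - 1 < n" using assms by presburger+
    then show ?thesis using C Kedge_iff[of 1 n "n - 1"] by simp
  qed
qed

lemma T0_det: assumes "n > 2" shows "edge_determining (K_vertices n) (K_edges n) (T0 n)"
  unfolding edge_determining_def
proof (intro conjI allI impI)
  show "T0 n \<subseteq> K_edges n" using T0_sub[OF assms] .
  fix \<phi> assume h: "graph_aut (K_vertices n) (K_edges n) \<phi> \<and> (\<forall>e\<in>T0 n. \<phi> ` e = e)"
  then have perm: "\<phi> permutes {0..<n}" and im: "\<And>e. e \<in> T0 n \<Longrightarrow> \<phi> ` e = e"
    unfolding graph_aut_def K_vertices_def by auto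
  have inj: "inj \<phi>" using perm by (rule permutes_inj)
  let ?m = "n div 3"
  have trip: "\<phi> (3*i) = 3*i \<and> \<phi> (3*i+2) = 3*i+2 \<and> \<phi> (3*i+1) = 3*i+1" if "i < ?m" for i
  proof (rule fix_mid[OF inj])
    show "\<phi> ` {3*i, 3*i+1} = {3*i, 3*i+1}" using that by (intro im) (auto simp: T0_def)
    show "\<phi> ` {3*i+1, 3*i+2} = {3*i+1, 3*i+2}" using that by (intro im) (auto simp: T0_def)
  qed auto
  have other: "\<phi> y = y" if ny: "y \<noteq> 3 * ?m" for y
  proof -
    have "n = 3 * ?m + n mod 3" "n mod 3 < 3" by simp_all
    then consider "y \<ge> n" | "y < 3 * ?m" | "y = 3 * ?m + 1" "y < n" using ny by linarith
    then show ?thesis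
    proof cases
      case 1
      then show ?thesis using permutes_not_in[OF perm] by simp
    next
      case 2
      define i where "i = y div 3"
      have "i < ?m" using 2 unfolding i_def by linarith
      moreover have "y = 3*i \<or> y = 3*i+1 \<or> y = 3*i+2" unfolding i_def by linarith
      ultimately show ?thesis using trip by auto
    next
      case 3
      moreover have "n = 3 * ?m + n mod 3" "n mod 3 < 3" by simp_all
      ultimately have r: "n mod 3 = 2" and y: "y = n - 1" by linarith+
      have "0 < ?m" using assms r by linarith
      then have f1: "\<phi> 1 = 1" using trip[of 0] by simp
      have "\<phi> ` {1, n-1} = {1, n-1}" using r by (intro im) (auto simp: T0_def)
      then have "\<phi> y \<in> {1, y}" using y by auto
      moreover have "y \<noteq> 1" using y assms r by linarith
      moreover have "\<phi> y \<noteq> \<phi> 1" using inj \<open>y \<noteq> 1\<close> by (meson injD)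
      ultimately show ?thesis using f1 by auto
    qed
  qed
  have "\<phi> (3 * ?m) = 3 * ?m"
  proof (rule ccontr)
    assume ne: "\<phi> (3 * ?m) \<noteq> 3 * ?m"
    then have "\<phi> (\<phi> (3 * ?m)) = \<phi> (3 * ?m)" using other by blast
    then have "\<phi> (3 * ?m) = 3 * ?m" using inj by (meson injD)
    then show False using ne by simp
  qed
  then show "\<phi> = id"
  proof -
    assume h3: "\<phi> (3 * ?m) = 3 * ?m"
    show "\<phi> = id"
    proof (rule ext)
      fix y show "\<phi> y = id y" using other[of y] h3 by (cases "y = 3 * ?m") simp_all
    qed
  qed
qed

theorem theorem8:
  fixes n :: nat
  assumes "n > 2"
  shows "det_index (K_vertices n) (K_edges n) = (2 * n) div 3"
  unfolding det_index_def
proof (rule Least_equality)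
  have c: "card (T0 n) = (2 * n) div 3"
    using T0_card[of n] lower_bound[OF T0_det[OF assms] T0_fin] by linarith
  show "\<exists>T. edge_determining (K_vertices n) (K_edges n) T \<and> finite T \<and> card T = 2 * n div 3"
    using T0_det[OF assms] T0_fin c by blast
next
  fix k assume "\<exists>T. edge_determining (K_vertices n) (K_edges n) T \<and> finite T \<and> card T = k"
  then obtain T where "edge_determining (K_vertices n) (K_edges n) T" "finite T" "card T = k" by blast
  then have "2 * n \<le> 3 * k + 2" using lower_bound by blast
  then show "2 * n div 3 \<le> k" by linarith
qed

end
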